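(* Let $p$ be an odd prime and $k\ge1$. Then $\mathcal{N}_{p^k}$ is a grounded tree with root $0$ and $p^{k-1}$ vertices, described as follows. (i) The vertices other than $0$ that have an edge to $0$ are exactly the residues $x=y\,p^\ell$ with $\lceil k/2\rceil\le \ell<k$, $1\le y\le p^{k-\ell}$ and $\gcd(y,p)=1$. (ii) For every nonzero $x\in\mathcal{N}_{p^k}$, write $x=\tilde x\,p^\ell$ with $1\le\ell<k$ and $\gcd(\tilde x,p)=1$, and let $\hat x\in\{1,\dots,p-1\}$ be $\tilde x\bmod p$. Then the in-tree of $x$ is isomorphic, as a rooted tree with root $x$, to $\mathcal{T}_p(\hat x,\ell)$. In particular, the subtree hanging off $0$ at the in-neighbour $y\,p^\ell$ from (i) is $\mathcal{T}_p(y \bmod p,\ \ell)$.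
   Context: $\mathcal{G}_{n}$ is the directed graph on $\{0,\dots,n-1\}$ with an edge $x\to x^2\bmod n$ for each $x$. $\mathcal{N}_{p^k}$ is the subgraph of $\mathcal{G}_{p^k}$ induced on the multiples of $p$ (the nilpotent residues). A grounded tree is a finite directed graph with all out-degrees one, a root carrying a loop, which is a tree after deleting the loop and in which every vertex has a directed path to the root. For a non-periodic vertex $x$, the in-tree of $x$ is the subgraph induced on all vertices $y$ with $f^j(y)=x$ for some $j\ge0$, where $f(y)=y^2\bmod p^k$. It is a rooted tree with root $x$ and edges directed toward the root. For $a\in\{1,\dots,p-1\}$ and $\ell\ge1$, the rooted tree $\mathcal{T}_p(a,\ell)$ (edges directed toward the root) is defined recursively on $\ell$: (1) if $\ell$ is odd, $\mathcal{T}_p(a,\ell)$ is a single vertex; (2) if $\ell$ is even and $a$ is not a square mod $p$, $\mathcal{T}_p(a,\ell)$ is a single vertex; (3) if $\ell$ is even and $a\equiv z_1^2\equiv z_2^2\pmod p$ with $z_1\neq z_2$ in $\{1,\dots,p-1\}$, then $\mathcal{T}_p(a,\ell)$ is a root with exactly $2p^{\ell/2}$ children. The subtrees rooted at $p^{\ell/2}$ of these children are copies of $\mathcal{T}_p(z_1,\ell/2)$, and the subtrees rooted at the other $p^{\ell/2}$ children are copies of $\mathcal{T}_p(z_2,\ell/2)$. *)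

theory Defs
  imports Main "HOL-Library.Multiset" "HOL-Number_Theory.Number_Theory"
begin

text \<open>Unordered rooted trees: a node together with the multiset of its child subtrees.
  Equality of such values is exactly isomorphism of rooted trees.\<close>
datatype rtree = Node "rtree multiset"

definition sqmap :: "nat \<Rightarrow> nat \<Rightarrow> nat" where
  "sqmap n x = x^2 mod n"

definition nil_verts :: "nat \<Rightarrow> nat \<Rightarrow> nat set" where
  "nil_verts p k = {x. x < p^k \<and> p dvd x}"

text \<open>Grounded tree, for a graph with vertex set V whose edges are x \<rightarrow> f x (out-degree one):
  finite, root r carries a loop, every vertex has a directed path to r, and the graph
  minus the loop is a tree (for a functional graph: no directed cycle other than the loop at r).\<close>
definition grounded_tree :: "'a set \<Rightarrow> ('a \<Rightarrow> 'a) \<Rightarrow> 'a \<Rightarrow> bool" where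
  "grounded_tree V f r \<longleftrightarrow> finite V \<and> r \<in> V \<and> (\<forall>x\<in>V. f x \<in> V) \<and> f r = r \<and>
     (\<forall>x\<in>V. \<exists>j. (f ^^ j) x = r) \<and>
     (\<forall>x\<in>V. \<forall>j>0. (f ^^ j) x = x \<longrightarrow> x = r)"

text \<open>in_tree_shape V f x t: the in-tree of x in the functional graph (V, f)
  (edges towards the root x) is isomorphic, as a rooted tree with root x, to t.\<close>
inductive in_tree_shape :: "'a set \<Rightarrow> ('a \<Rightarrow> 'a) \<Rightarrow> 'a \<Rightarrow> rtree \<Rightarrow> bool"
  for V f where
  "finite {y\<in>V. f y = x} \<Longrightarrow>
   (\<forall>y\<in>{y\<in>V. f y = x}. in_tree_shape V f y (g y)) \<Longrightarrow>
   in_tree_shape V f x (Node (image_mset g (mset_set {y\<in>V. f y = x})))"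

function Tp :: "nat \<Rightarrow> nat \<Rightarrow> nat \<Rightarrow> rtree" where
  "Tp p a l =
    (if l = 0 \<or> odd l \<or> \<not> (\<exists>z\<in>{1..p-1}. [z^2 = a] (mod p)) then Node {#}
     else Node (\<Sum>z\<in>{z\<in>{1..p-1}. [z^2 = a] (mod p)}. replicate_mset (p^(l div 2)) (Tp p z (l div 2))))"
  by pat_completeness auto
termination
  by (relation "measure (\<lambda>(p,a,l). l)") auto

end

theory Submission
  imports Defs
begin


lemma odd_prime_ndvd2:
  fixes p :: int assumes "prime p" "odd p" shows "\<not> p dvd 2"
proof
  assume "p dvd 2"
  then have "p \<le> 2" by (simp add: zdvd_imp_le)
  moreover have "p \<ge> 2" using assms(1) prime_ge_2_int by blast
  ultimately show False using assms(2) by simp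
qed

lemma hensel_unique:
  fixes p r1 r2 z :: int
  assumes "prime p" "odd p" "coprime z p" "[r1 = z] (mod p)" "[r2 = z] (mod p)"
    "[r1^2 = r2^2] (mod p^n)"
  shows "[r1 = r2] (mod p^n)"
proof -
  have "[r1 + r2 = 2*z] (mod p)" using assms(4,5) cong_add by fastforce
  moreover have "\<not> p dvd 2*z"
  proof
    assume "p dvd 2*z"
    then have "p dvd 2 \<or> p dvd z" using assms(1) prime_dvd_mult_iff by blast
    moreover have "\<not> p dvd 2"
    proof
      assume "p dvd 2"
      then have "p \<le> 2" by (simp add: zdvd_imp_le)
      moreover have "p \<ge> 2" using assms(1) prime_ge_2_int by blast
      ultimately show False using assms(2) by simp
    qed
    moreover have "\<not> p dvd z" using assms(1,3)
      by (metis coprime_commute not_prime_unit coprime_absorb_left)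
    ultimately show False by blast
  qed
  ultimately have "\<not> p dvd r1 + r2" by (metis cong_dvd_iff)
  then have "coprime (r1 + r2) p" using assms(1)
    by (metis coprime_commute prime_imp_coprime)
  then have cop: "coprime (r1 + r2) (p^n)" by simp
  have "p^n dvd r1^2 - r2^2" using assms(6) by (simp add: cong_iff_dvd_diff)
  also have "r1^2 - r2^2 = (r1 + r2) * (r1 - r2)" by (simp add: power2_eq_square algebra_simps)
  finally have "p^n dvd r1 - r2" using cop
    by (metis coprime_commute coprime_dvd_mult_right_iff)
  then show ?thesis by (simp add: cong_iff_dvd_diff)
qed

lemma hensel_exists:
  fixes p a z :: int
  assumes "prime p" "odd p" "coprime z p" "[z^2 = a] (mod p)" "n \<ge> 1"
  shows "\<exists>r. [r = z] (mod p) \<and> [r^2 = a] (mod p^n)"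
  using assms(5)
proof (induction n rule: dec_induct)
  case base
  then show ?case using assms(4) by (intro exI[of _ z]) auto
next
  case (step n)
  then obtain r where r1: "[r = z] (mod p)" and r2: "[r^2 = a] (mod p^n)" by blast
  from r2 obtain t where t: "r^2 - a = p^n * t" by (metis cong_iff_dvd_diff cong_sym dvd_def)
  have "coprime r p" using r1 assms(3)
    by (metis cong_imp_coprime cong_sym)
  moreover have "coprime 2 p" using assms(1,2)
    using odd_prime_ndvd2[OF assms(1,2)] assms(1) by (metis coprime_commute prime_imp_coprime)
  ultimately have "coprime (2*r) p" by simp
  then obtain u where u: "[2*r*u = 1] (mod p)" using cong_solve_coprime_int by blast
  define s where "s = - t * u"
  define r' where "r' = r + s * p^n"
  have e0: "(r + s*P)^2 - a = P * (t * (1 - 2*r*u)) + s^2 * (P*P)" if "r^2 - a = P*t" for P :: int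
  proof -
    have "(r + s*P)^2 - a = (r^2 - a) + 2*r*s*P + s^2*(P*P)"
      by (simp add: power2_eq_square algebra_simps)
    also have "\<dots> = P * (t * (1 - 2*r*u)) + s^2 * (P*P)"
      unfolding that s_def by (simp add: algebra_simps)
    finally show ?thesis .
  qed
  have pp: "p^(2*n) = p^n*p^n" by (simp add: mult_2 power_add)
  have "r'^2 - a = p^n * (t * (1 - 2*r*u)) + s^2 * p^(2*n)"
    unfolding r'_def pp by (rule e0[OF t])
  moreover have "p dvd 1 - 2*r*u" using u by (metis cong_iff_dvd_diff cong_sym)
  then have "p dvd t * (1 - 2*r*u)" by (rule dvd_mult)
  then have "p^n * p dvd p^n * (t * (1 - 2*r*u))" by (rule mult_dvd_mono[OF dvd_refl])
  then have "p^Suc n dvd p^n * (t * (1 - 2*r*u))" by (simp only: power_Suc2)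
  moreover have "p^Suc n dvd p^(2*n)" using step(1) by (intro le_imp_power_dvd) simp
  ultimately have "p^Suc n dvd r'^2 - a" by (metis dvd_add dvd_mult)
  moreover have "[r' = z] (mod p)"
  proof -
    have "p dvd p^n" using step(1) by (intro dvd_power) auto
    then have "p dvd s * p^n" by (rule dvd_mult)
    then have "[r' = r] (mod p)" unfolding r'_def by (simp add: cong_iff_dvd_diff)
    then show ?thesis using r1 by (metis cong_trans)
  qed
  ultimately show ?case by (metis cong_iff_dvd_diff cong_sym)
qed



lemma decomp:
  fixes p x :: nat assumes "prime p" "x > 0"
  shows "\<exists>w j. x = w * p^j \<and> coprime w p"
proof -
  obtain w where w: "x = p ^ multiplicity p x * w" "\<not> p dvd w" by (rule multiplicity_decompose'[where x=x and p=p]) (use assms in \<open>auto simp: prime_gt_0_nat\<close>)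
  have "coprime p w" using assms(1) w(2) by (rule prime_imp_coprime)
  then have "coprime w p" by (simp add: coprime_commute)
  moreover have "x = w * p ^ multiplicity p x" using w(1) by (metis mult.commute)
  ultimately show ?thesis by (intro exI conjI)
qed

lemma coprime_ndvd: fixes p a :: nat assumes "prime p" "coprime a p" shows "\<not> p dvd a"
proof
  assume "p dvd a"
  then have "p dvd gcd a p" by (rule gcd_greatest) (rule dvd_refl)
  moreover have "gcd a p = 1" using assms(2) by (rule coprime_imp_gcd_eq_1)
  ultimately have "p = 1" by simp
  then show False using assms(1) by simp
qed

lemma val_unique:
  fixes p a b :: nat assumes "prime p" "coprime a p" "coprime b p" "a * p^i = b * p^j"
  shows "i = j"
proof (rule ccontr)
  assume "i \<noteq> j"
  have pos: "p > 0" using assms(1) prime_gt_0_nat by blast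
  have gen: "p dvd c" if "c * p^u = d * p^v" "u < v" for c d u v :: nat
  proof -
    have "v = (v-u) + u" using that(2) by simp
    then have "p^v = p^(v-u) * p^u" by (metis power_add)
    then have "c * p^u = (d * p^(v-u)) * p^u" using that(1) by (simp only: mult.assoc)
    then have "c = d * p^(v-u)" using pos by simp
    moreover have "p dvd p^(v-u)" using that(2) by (intro dvd_power) auto
    ultimately show ?thesis by simp
  qed
  show False
  proof (cases "i < j")
    case True
    then have "p dvd a" using gen[OF assms(4)] by simp
    then show False using coprime_ndvd[OF assms(1,2)] by simp
  next
    case False
    then have "j < i" using \<open>i \<noteq> j\<close> by simp
    then have "p dvd b" using gen[OF assms(4)[symmetric]] by simp
    then show False using coprime_ndvd[OF assms(1,3)] by simp
  qed
qed

lemma sqmod: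
  fixes p w j k :: nat assumes "2*j < k"
  shows "(w * p^j)^2 mod p^k = (w^2 mod p^(k-2*j)) * p^(2*j)"
proof -
  have "p^k = p^(k-2*j) * p^(2*j)" using assms by (metis le_add_diff_inverse2 less_imp_le power_add)
  moreover have "(w * p^j)^2 = w^2 * p^(2*j)" by (simp add: power_mult_distrib power_even_eq)
  ultimately show ?thesis by (simp add: mod_mult_mult2)
qed

lemma iter_sq: "x < n \<Longrightarrow> (sqmap n ^^ j) x = x^(2^j) mod n"
proof (induction j)
  case 0 then show ?case by simp
next
  case (Suc j)
  have "x^(2^Suc j) = (x^(2^j))^2" by (metis power_Suc2 power_mult)
  have "(sqmap n ^^ Suc j) x = ((sqmap n ^^ j) x)^2 mod n" by (simp add: sqmap_def)
  also have "\<dots> = (x^(2^j) mod n)^2 mod n" using Suc by simp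
  also have "\<dots> = (x^(2^j))^2 mod n" by (rule power_mod)
  finally show ?case using \<open>x^(2^Suc j) = (x^(2^j))^2\<close> by simp
qed

lemma preimage_form:
  fixes p xt l k y :: nat
  assumes "prime p" "coprime xt p" "l < k" "y^2 mod p^k = xt * p^l"
  shows "even l \<and> (\<exists>w. y = w * p^(l div 2) \<and> coprime w p)"
proof -
  have pos: "p > 0" using assms(1) prime_gt_0_nat by blast
  have "xt \<noteq> 0" using assms(1,2) by (metis coprime_0_left_iff not_prime_unit)
  then have "xt * p^l \<noteq> 0" using pos by simp
  have "y \<noteq> 0"
  proof
    assume "y = 0"
    then have "y^2 mod p^k = 0" by simp
    then show False using assms(4) \<open>xt * p^l \<noteq> 0\<close> by simp
  qed
  then obtain w j where y: "y = w * p^j" and cw: "coprime w p" using decomp[OF assms(1)] by blast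
  have "2*j < k"
  proof (rule ccontr)
    assume "\<not> 2*j < k"
    then have "p^k dvd p^(2*j)" by (intro le_imp_power_dvd) simp
    moreover have "y^2 = w^2 * p^(2*j)" unfolding y by (simp add: power_mult_distrib power_even_eq)
    ultimately have "p^k dvd y^2" by simp
    then have "y^2 mod p^k = 0" by (rule dvd_imp_mod_0)
    then show False using assms(4) \<open>xt * p^l \<noteq> 0\<close> by argo
  qed
  define c where "c = w^2 mod p^(k-2*j)"
  have eq: "xt * p^l = c * p^(2*j)" using assms(4) sqmod[OF \<open>2*j < k\<close>, of w p] unfolding y c_def by (rule subst)
  have "coprime c p"
  proof -
    have "\<not> p dvd c"
    proof
      assume "p dvd c"
      moreover have "p dvd p^(k-2*j)" using \<open>2*j < k\<close> by (intro dvd_power) auto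
      ultimately have "p dvd w^2" unfolding c_def by (metis dvd_mod_iff)
      then have "p dvd w" using assms(1) prime_dvd_power by blast
      then show False using coprime_ndvd[OF assms(1) cw] by blast
    qed
    then show ?thesis using assms(1) by (metis coprime_commute prime_imp_coprime)
  qed
  have "l = 2*j" using val_unique[OF assms(1,2) \<open>coprime c p\<close> eq] .
  then have "l div 2 = j" "even l" by simp_all
  then show ?thesis using y cw by metis
qed



lemma count_cong:
  fixes M c r :: nat assumes "M > 0"
  shows "card {w. w < c*M \<and> [w = r] (mod M)} = c"
proof -
  have "{w. w < c*M \<and> [w = r] (mod M)} = (\<lambda>i. r mod M + i*M) ` {..<c}"
  proof (intro Set.set_eqI iffI)
    fix w assume "w \<in> {w. w < c*M \<and> [w = r] (mod M)}"
    then have w: "w < c*M" "w mod M = r mod M" by (auto simp: cong_def)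
    have "w = r mod M + (w div M) * M" using mod_div_mult_eq[of w M] w(2) by linarith
    moreover have "w div M < c" using w(1) assms by (simp add: div_less_iff_less_mult)
    ultimately show "w \<in> (\<lambda>i. r mod M + i*M) ` {..<c}" by blast
  next
    fix w assume "w \<in> (\<lambda>i. r mod M + i*M) ` {..<c}"
    then obtain i where i: "i < c" "w = r mod M + i*M" by blast
    have "r mod M < M" using assms by simp
    moreover have "i*M + M \<le> c*M" using i(1)
      by (metis Suc_leI mult_Suc add.commute mult_le_mono1)
    ultimately have "w < c*M" using i(2) by linarith
    moreover have "[w = r] (mod M)" using i(2) by (simp add: cong_def)
    ultimately show "w \<in> {w. w < c*M \<and> [w = r] (mod M)}" by blast
  qed
  moreover have "inj_on (\<lambda>i. r mod M + i*M) {..<c}" using assms by (auto simp: inj_on_def)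
  ultimately show ?thesis by (simp add: card_image)
qed

lemma count_roots:
  fixes p xt z e m :: nat
  assumes "prime p" "odd p" "coprime xt p" "[z^2 = xt] (mod p)" "e \<ge> 1" "z < p"
  shows "card {w. w < p^e * p^m \<and> w mod p = z \<and> [w^2 = xt] (mod p^e)} = p^m"
proof -
  have pos: "p > 0" using assms(1) prime_gt_0_nat by blast
  have ip: "prime (int p)" using assms(1) by simp
  have iodd: "odd (int p)" using assms(2) by simp
  have "coprime (z^2) p" using assms(3,4) by (metis cong_imp_coprime cong_sym)
  then have cz: "coprime z p" by simp
  then have czi: "coprime (int z) (int p)" by simp
  have "[int z^2 = int xt] (mod int p)" using assms(4) by (metis cong_int_iff of_nat_power)
  then obtain r where r1: "[r = int z] (mod int p)" and r2: "[r^2 = int xt] (mod (int p)^e)"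
    using hensel_exists[OF ip iodd czi _ assms(5)] by blast
  define r0 where "r0 = nat (r mod (int p)^e)"
  have r0: "[int r0 = r] (mod (int p)^e)" unfolding r0_def using pos by (simp add: cong_def)
  have "{w. w < p^e * p^m \<and> w mod p = z \<and> [w^2 = xt] (mod p^e)} = {w. w < p^m * p^e \<and> [w = r0] (mod p^e)}"
  proof (intro Set.set_eqI iffI)
    fix w assume "w \<in> {w. w < p^e * p^m \<and> w mod p = z \<and> [w^2 = xt] (mod p^e)}"
    then have w: "w < p^e * p^m" "w mod p = z" "[w^2 = xt] (mod p^e)" by auto
    have wz: "[int w = int z] (mod int p)" using w(2) assms(6) by (simp add: cong_def flip: of_nat_mod)
    have "[int (w^2) = int xt] (mod int (p^e))" using w(3) by (simp only: cong_int_iff)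
    then have "[(int w)^2 = int xt] (mod (int p)^e)" by simp
    then have "[(int w)^2 = r^2] (mod (int p)^e)" using cong_sym[OF r2] by (rule cong_trans)
    then have "[int w = r] (mod (int p)^e)"
      by (rule hensel_unique[OF ip iodd czi wz r1])
    then have "[int w = int r0] (mod (int p)^e)" using cong_sym[OF r0] by (rule cong_trans)
    then have "[int w = int r0] (mod int (p^e))" by simp
    then have "[w = r0] (mod p^e)" by (simp only: cong_int_iff)
    then show "w \<in> {w. w < p^m * p^e \<and> [w = r0] (mod p^e)}" using w(1) by (simp add: mult.commute)
  next
    fix w assume "w \<in> {w. w < p^m * p^e \<and> [w = r0] (mod p^e)}"
    then have w: "w < p^m * p^e" "[w = r0] (mod p^e)" by auto
    have "[int w = int r0] (mod int (p^e))" using w(2) by (simp only: cong_int_iff)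
    then have "[int w = int r0] (mod (int p)^e)" by simp
    then have c: "[int w = r] (mod (int p)^e)" using r0 by (rule cong_trans)
    have dv: "int p dvd (int p)^e" using assms(5) by (intro dvd_power) auto
    have "[int w = r] (mod int p)" using cong_dvd_modulus[OF c dv] .
    then have "[int w = int z] (mod int p)" using r1 by (rule cong_trans)
    then have "[w = z] (mod p)" by (simp only: cong_int_iff)
    then have "w mod p = z" using assms(6) by (simp add: cong_def)
    moreover have "[(int w)^2 = r^2] (mod (int p)^e)" using c by (rule cong_pow)
    then have "[(int w)^2 = int xt] (mod (int p)^e)" using r2 by (rule cong_trans)
    then have "[int (w^2) = int xt] (mod int (p^e))" by simp
    then have "[w^2 = xt] (mod p^e)" by (simp only: cong_int_iff)
    ultimately show "w \<in> {w. w < p^e * p^m \<and> w mod p = z \<and> [w^2 = xt] (mod p^e)}"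
      using w(1) by (simp add: mult.commute)
  qed
  then show ?thesis using count_cong[of "p^e" "p^m" r0] pos by simp
qed



lemma sum_single_const: "finite A \<Longrightarrow> (\<Sum>y\<in>A. {#c#}) = replicate_mset (card A) c"
  by (induction A rule: finite_induct) auto

lemma image_mset_sum: "finite A \<Longrightarrow> image_mset g (mset_set A) = (\<Sum>y\<in>A. {#g y#})"
  by (induction A rule: finite_induct) auto

lemma Tp_leaf: "l = 0 \<or> odd l \<or> \<not> (\<exists>z\<in>{1..p-1}. [z^2 = a] (mod p)) \<Longrightarrow> Tp p a l = Node {#}"
  by (subst Tp.simps) simp

lemma Tp_node: "l \<noteq> 0 \<Longrightarrow> even l \<Longrightarrow> (\<exists>z\<in>{1..p-1}. [z^2 = a] (mod p)) \<Longrightarrow>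
  Tp p a l = Node (\<Sum>z\<in>{z\<in>{1..p-1}. [z^2 = a] (mod p)}. replicate_mset (p^(l div 2)) (Tp p z (l div 2)))"
  by (subst Tp.simps) simp

lemma char:
  fixes p k xt l m y :: nat
  assumes "prime p" "coprime xt p" "l = 2*m" "l < k" "m \<ge> 1" "xt*p^l < p^k"
  shows "(y \<in> nil_verts p k \<and> sqmap (p^k) y = xt*p^l) \<longleftrightarrow>
         (\<exists>w. y = w*p^m \<and> w < p^(k-l)*p^m \<and> [w^2 = xt] (mod p^(k-l)))"
proof -
  have pos: "p > 0" using assms(1) prime_gt_0_nat by blast
  have "k = (k-l) + l" using assms(4) by simp
  then have pk: "p^k = p^(k-l)*p^l" by (metis power_add)
  have "k = ((k-l) + m) + m" using assms(3,4) by simp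
  then have pkm: "p^k = (p^(k-l)*p^m)*p^m" by (metis power_add)
  have xtlt: "xt < p^(k-l)" using assms(6) pk pos by simp
  have sq: "(w*p^m)^2 mod p^k = (w^2 mod p^(k-l))*p^l" for w
    using sqmod[of m k w p] assms(3,4) by simp
  have pm: "p dvd p^m" using assms(5) by (intro dvd_power) auto
  show ?thesis
  proof
    assume A: "y \<in> nil_verts p k \<and> sqmap (p^k) y = xt*p^l"
    then have yk: "y < p^k" and fy: "y^2 mod p^k = xt*p^l" by (auto simp: nil_verts_def sqmap_def)
    obtain w where w: "y = w*p^(l div 2)" using preimage_form[OF assms(1,2,4) fy] by blast
    then have w': "y = w*p^m" using assms(3) by simp
    have "w*p^m < (p^(k-l)*p^m)*p^m" using yk pkm w' by simp
    then have "w < p^(k-l)*p^m" using pos by simp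
    moreover have "(w^2 mod p^(k-l))*p^l = xt*p^l" using fy sq[of w] w' by simp
    then have "w^2 mod p^(k-l) = xt" using pos by simp
    then have "[w^2 = xt] (mod p^(k-l))" using xtlt by (simp add: cong_def)
    ultimately show "\<exists>w. y = w*p^m \<and> w < p^(k-l)*p^m \<and> [w^2 = xt] (mod p^(k-l))" using w' by blast
  next
    assume "\<exists>w. y = w*p^m \<and> w < p^(k-l)*p^m \<and> [w^2 = xt] (mod p^(k-l))"
    then obtain w where w: "y = w*p^m" "w < p^(k-l)*p^m" "[w^2 = xt] (mod p^(k-l))" by blast
    have "w*p^m < (p^(k-l)*p^m)*p^m" using w(2) pos by simp
    then have "y < p^k" using w(1) pkm by simp
    moreover have "p dvd y" using w(1) pm by simp
    moreover have "w^2 mod p^(k-l) = xt" using w(3) xtlt by (simp add: cong_def)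
    then have "y^2 mod p^k = xt*p^l" using sq[of w] w(1) by simp
    ultimately show "y \<in> nil_verts p k \<and> sqmap (p^k) y = xt*p^l" by (simp add: nil_verts_def sqmap_def)
  qed
qed

lemma cop_from_cong:
  fixes p xt w e :: nat
  assumes "prime p" "coprime xt p" "e \<ge> 1" "[w^2 = xt] (mod p^e)"
  shows "coprime w p \<and> [w^2 = xt] (mod p)"
proof -
  have "p dvd p^e" using assms(3) by (intro dvd_power) auto
  then have c: "[w^2 = xt] (mod p)" using assms(4) by (rule cong_dvd_modulus_nat[rotated])
  have "coprime (w^2) p" using cong_sym[OF c] assms(2) by (rule cong_imp_coprime)
  then show ?thesis using c by simp
qed

lemma intree:
  fixes p k :: nat
  assumes "prime p" "odd p"
  shows "x \<in> nil_verts p k \<Longrightarrow> x = xt*p^l \<Longrightarrow> 1 \<le> l \<Longrightarrow> l < k \<Longrightarrow> coprime xt p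
    \<Longrightarrow> in_tree_shape (nil_verts p k) (sqmap (p^k)) x (Tp p (xt mod p) l)"
proof (induction l arbitrary: x xt rule: less_induct)
  case (less l)
  define V where "V = nil_verts p k"
  define f where "f = sqmap (p^k)"
  define S where "S = {y\<in>V. f y = x}"
  define a where "a = xt mod p"
  define Z where "Z = {z\<in>{1..p-1}. [z^2 = a] (mod p)}"
  have pos: "p > 0" using assms(1) prime_gt_0_nat by blast
  have xlt: "xt*p^l < p^k" using less.prems(1,2) by (simp add: nil_verts_def)
  have finV: "finite V" unfolding V_def nil_verts_def by simp
  then have finS: "finite S" unfolding S_def by simp
  have ekl: "k - l \<ge> 1" using less.prems(4) by simp
  have zmem: "even l \<and> (\<exists>w. y = w*p^(l div 2) \<and> w < p^(k-l)*p^(l div 2) \<and> [w^2 = xt] (mod p^(k-l)) \<and> coprime w p)"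
    if "y \<in> S" for y
  proof -
    have fy: "y^2 mod p^k = xt*p^l" using that less.prems(2) by (simp add: S_def f_def sqmap_def)
    have ev: "even l" using preimage_form[OF assms(1) less.prems(5,4) fy] by blast
    then have l2: "l = 2*(l div 2)" and l1: "l div 2 \<ge> 1" using less.prems(3) by auto
    from char[OF assms(1) less.prems(5) l2 less.prems(4) l1 xlt, of y] that less.prems(2)
    obtain w where w: "y = w*p^(l div 2)" "w < p^(k-l)*p^(l div 2)" "[w^2 = xt] (mod p^(k-l))"
      by (auto simp: S_def V_def f_def)
    moreover have "coprime w p" using cop_from_cong[OF assms(1) less.prems(5) ekl w(3)] by blast
    ultimately show ?thesis using ev by blast
  qed
  have zZ: "w mod p \<in> Z" if "coprime w p" "[w^2 = xt] (mod p^(k-l))" for w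
  proof -
    have "[w^2 = xt] (mod p)" using cop_from_cong[OF assms(1) less.prems(5) ekl that(2)] by blast
    then have "[(w mod p)^2 = a] (mod p)" by (simp add: a_def cong_def power_mod)
    moreover have "w mod p \<noteq> 0" using that(1) coprime_ndvd[OF assms(1)] by (metis dvd_eq_mod_eq_0)
    moreover have "w mod p < p" using pos by simp
    ultimately show ?thesis unfolding Z_def by auto
  qed
  have Zex: "(\<exists>z\<in>{1..p-1}. [z^2 = a] (mod p)) \<longleftrightarrow> Z \<noteq> {}" unfolding Z_def by blast
  show ?case
  proof (cases "odd l \<or> Z = {}")
    case True
    have "S = {}"
    proof (rule ccontr)
      assume "S \<noteq> {}"
      then obtain y where "y \<in> S" by blast
      from zmem[OF this] obtain w where "even l" "coprime w p" "[w^2 = xt] (mod p^(k-l))" by blast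
      then show False using True zZ by blast
    qed
    have T: "Tp p (xt mod p) l = Node {#}" using True Zex by (intro Tp_leaf) (auto simp: a_def)
    have "in_tree_shape V f x (Node (image_mset (\<lambda>_. Node {#}) (mset_set S)))"
      unfolding S_def by (rule in_tree_shape.intros) (use finS \<open>S = {}\<close> in \<open>auto simp: S_def\<close>)
    then show ?thesis using T \<open>S = {}\<close> by (simp add: V_def f_def)
  next
    case False
    then have ev: "even l" and Zne: "Z \<noteq> {}" by auto
    define m where "m = l div 2"
    have lm: "l = 2*m" "m \<ge> 1" "m < l" using ev less.prems(3) by (auto simp: m_def)
    have T: "Tp p (xt mod p) l = Node (\<Sum>z\<in>Z. replicate_mset (p^m) (Tp p z m))"
      unfolding Z_def a_def m_def using Tp_node[of l p "xt mod p"] lm Zne Zex by (auto simp: a_def)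
    define h where "h y = (y div p^m) mod p" for y
    define g where "g y = Tp p (h y) m" for y
    have Sform: "\<exists>w. y = w*p^m \<and> coprime w p \<and> y div p^m = w \<and> h y \<in> Z" if "y \<in> S" for y
    proof -
      from zmem[OF that] obtain w where w: "y = w*p^m" "[w^2 = xt] (mod p^(k-l))" "coprime w p"
        by (auto simp: m_def)
      have "y div p^m = w" using w(1) pos by simp
      then show ?thesis using w zZ[OF w(3,2)] by (auto simp: h_def)
    qed
    have sub: "\<forall>y\<in>S. in_tree_shape V f y (g y)"
    proof
      fix y assume y: "y \<in> S"
      then obtain w where w: "y = w*p^m" "coprime w p" "y div p^m = w" using Sform by blast
      have "y \<in> V" using y by (simp add: S_def)
      have "in_tree_shape (nil_verts p k) (sqmap (p^k)) y (Tp p (w mod p) m)"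
        using less.IH[OF lm(3)] \<open>y \<in> V\<close> w lm less.prems(4) by (simp add: V_def)
      then show "in_tree_shape V f y (g y)" using w by (simp add: g_def h_def V_def f_def)
    qed
    have card: "card {y\<in>S. h y = z} = p^m" if "z \<in> Z" for z
    proof -
      define T where "T = {w. w < p^(k-l)*p^m \<and> w mod p = z \<and> [w^2 = xt] (mod p^(k-l))}"
      have "{y\<in>S. h y = z} = (\<lambda>w. w*p^m) ` T"
      proof (intro Set.set_eqI iffI)
        fix y assume "y \<in> {y\<in>S. h y = z}"
        then have y: "y \<in> V" "f y = x" "h y = z" by (auto simp: S_def)
        from char[OF assms(1) less.prems(5) lm(1) less.prems(4) lm(2) xlt, of y] y less.prems(2)
        obtain w where w: "y = w*p^m" "w < p^(k-l)*p^m" "[w^2 = xt] (mod p^(k-l))"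
          by (auto simp: V_def f_def)
        have "y div p^m = w" using w(1) pos by simp
        then have "w mod p = z" using y(3) by (simp add: h_def)
        then show "y \<in> (\<lambda>w. w*p^m) ` T" using w unfolding T_def by blast
      next
        fix y assume "y \<in> (\<lambda>w. w*p^m) ` T"
        then obtain w where w: "y = w*p^m" "w < p^(k-l)*p^m" "w mod p = z" "[w^2 = xt] (mod p^(k-l))"
          unfolding T_def by blast
        have "y \<in> V \<and> f y = x"
          using char[OF assms(1) less.prems(5) lm(1) less.prems(4) lm(2) xlt, of y] w less.prems(2)
          by (auto simp: V_def f_def)
        moreover have "y div p^m = w" using w(1) pos by simp
        then have "h y = z" using w(3) by (simp add: h_def)
        ultimately show "y \<in> {y\<in>S. h y = z}" by (simp add: S_def)
      qed
      moreover have "inj_on (\<lambda>w. w*p^m) T" using pos by (auto simp: inj_on_def)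
      moreover have "card T = p^m"
      proof -
        have "z \<in> {1..p-1}" "[z^2 = a] (mod p)" using that by (auto simp: Z_def)
        then have "z < p" "[z^2 = xt] (mod p)" using pos by (auto simp: a_def cong_def)
        then show ?thesis unfolding T_def using count_roots[OF assms(1,2) less.prems(5) _ ekl] by blast
      qed
      ultimately show ?thesis by (simp add: card_image)
    qed
    have finZ: "finite Z" unfolding Z_def by simp
    have hS: "h ` S \<subseteq> Z" using Sform by blast
    have "image_mset g (mset_set S) = (\<Sum>y\<in>S. {#g y#})" using finS by (rule image_mset_sum)
    also have "\<dots> = (\<Sum>z\<in>Z. \<Sum>y\<in>{y\<in>S. h y = z}. {#g y#})"
      using sum.group[OF finS finZ hS, of "\<lambda>y. {#g y#}"] by simp
    also have "\<dots> = (\<Sum>z\<in>Z. replicate_mset (p^m) (Tp p z m))"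
    proof (rule sum.cong[OF refl])
      fix z assume z: "z \<in> Z"
      have "(\<Sum>y\<in>{y\<in>S. h y = z}. {#g y#}) = (\<Sum>y\<in>{y\<in>S. h y = z}. {#Tp p z m#})"
        by (rule sum.cong) (auto simp: g_def)
      also have "\<dots> = replicate_mset (card {y\<in>S. h y = z}) (Tp p z m)"
        using finS by (intro sum_single_const) simp
      finally show "(\<Sum>y\<in>{y\<in>S. h y = z}. {#g y#}) = replicate_mset (p^m) (Tp p z m)"
        using card[OF z] by simp
    qed
    finally have eq: "image_mset g (mset_set S) = (\<Sum>z\<in>Z. replicate_mset (p^m) (Tp p z m))" .
    have "in_tree_shape V f x (Node (image_mset g (mset_set S)))"
      unfolding S_def by (rule in_tree_shape.intros) (use finS sub in \<open>auto simp: S_def\<close>)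
    then show ?thesis using T eq by (simp add: V_def f_def)
  qed
qed

lemma pow_dvd_iter:
  fixes p k x n :: nat
  assumes "p dvd x" "k \<le> n"
  shows "p^k dvd x^(2^n)"
proof -
  have "p^(2^n) dvd x^(2^n)" using assms(1) by (rule dvd_power_same)
  moreover have "k \<le> 2^n" using assms(2) less_exp[of n] by linarith
  then have "p^k dvd p^(2^n)" by (rule le_imp_power_dvd)
  ultimately show ?thesis by (rule dvd_trans[rotated])
qed

lemma mem_form:
  fixes p k y l :: nat
  assumes "prime p" "coprime y p" "1 \<le> l" "l < k" "y \<le> p^(k-l)"
  shows "y*p^l \<in> nil_verts p k \<and> y*p^l \<noteq> 0"
proof -
  have pos: "p > 0" using assms(1) prime_gt_0_nat by blast
  have "y \<noteq> p^(k-l)"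
  proof
    assume "y = p^(k-l)"
    moreover have "p dvd p^(k-l)" using assms(4) by (intro dvd_power) auto
    ultimately show False using coprime_ndvd[OF assms(1,2)] by simp
  qed
  then have "y < p^(k-l)" using assms(5) by simp
  then have "y*p^l < p^(k-l)*p^l" using pos by simp
  moreover have "k = (k-l) + l" using assms(4) by simp
  then have "p^k = p^(k-l)*p^l" by (metis power_add)
  ultimately have "y*p^l < p^k" by simp
  moreover have "p dvd p^l" using assms(3) by (intro dvd_power) auto
  then have "p dvd y*p^l" by simp
  moreover have "y \<noteq> 0" using assms(1,2) by (metis coprime_0_left_iff not_prime_unit)
  ultimately show ?thesis using pos by (simp add: nil_verts_def)
qed

theorem theorem9:
  fixes p k :: nat
  assumes "prime p" and "odd p" and "k \<ge> 1"
  shows "grounded_tree (nil_verts p k) (sqmap (p^k)) 0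
    \<and> card (nil_verts p k) = p^(k-1)
    \<and> {x \<in> nil_verts p k. x \<noteq> 0 \<and> sqmap (p^k) x = 0}
        = {y * p^l | y l. (k + 1) div 2 \<le> l \<and> l < k \<and> 1 \<le> y \<and> y \<le> p^(k-l) \<and> coprime y p}
    \<and> (\<forall>x\<in>nil_verts p k. \<forall>xt l. x \<noteq> 0 \<and> x = xt * p^l \<and> 1 \<le> l \<and> l < k \<and> coprime xt p
          \<longrightarrow> in_tree_shape (nil_verts p k) (sqmap (p^k)) x (Tp p (xt mod p) l))
    \<and> (\<forall>y l. (k + 1) div 2 \<le> l \<and> l < k \<and> 1 \<le> y \<and> y \<le> p^(k-l) \<and> coprime y p
          \<longrightarrow> in_tree_shape (nil_verts p k) (sqmap (p^k)) (y * p^l) (Tp p (y mod p) l))"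
proof -
  define V where "V = nil_verts p k"
  define f where "f = sqmap (p^k)"
  have pos: "p > 0" using assms(1) prime_gt_0_nat by blast
  have finV: "finite V" unfolding V_def nil_verts_def by simp
  have memV: "x \<in> V \<longleftrightarrow> x < p^k \<and> p dvd x" for x by (simp add: V_def nil_verts_def)
  have GT: "grounded_tree V f 0"
    unfolding grounded_tree_def
  proof (intro conjI ballI allI impI)
    show "finite V" by (rule finV)
    show "0 \<in> V" using pos memV by simp
    show "f 0 = 0" by (simp add: f_def sqmap_def)
  next
    fix x assume x: "x \<in> V"
    have "p dvd x^2" using x memV by (simp add: power2_eq_square)
    moreover have "p dvd p^k" using assms(3) by (intro dvd_power) auto
    ultimately have "p dvd x^2 mod p^k" by (simp add: dvd_mod)
    moreover have "x^2 mod p^k < p^k" using pos by simp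
    ultimately show "f x \<in> V" using memV by (simp add: f_def sqmap_def)
  next
    fix x assume x: "x \<in> V"
    have "(f ^^ k) x = x^(2^k) mod p^k" unfolding f_def using x memV by (intro iter_sq) simp
    also have "\<dots> = 0" using pow_dvd_iter[of p x k k] x memV by simp
    finally show "\<exists>j. (f ^^ j) x = 0" by blast
  next
    fix x j assume x: "x \<in> V" and j: "0 < j" and fx: "(f ^^ j) x = x"
    have it: "((f ^^ j) ^^ n) x = x" for n by (induction n) (simp_all add: fx)
    have "(f ^^ (j*k)) x = x" using it[of k] by (simp add: funpow_mult)
    moreover have "(f ^^ (j*k)) x = x^(2^(j*k)) mod p^k" unfolding f_def using x memV by (intro iter_sq) simp
    moreover have "k \<le> j*k" using j by simp
    then have "p^k dvd x^(2^(j*k))" using pow_dvd_iter[of p x k "j*k"] x memV by simp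
    ultimately show "x = 0" by simp
  qed
  have CARD: "card V = p^(k-1)"
  proof -
    have "k = Suc (k-1)" using assms(3) by simp
    then have pk: "p^k = p * p^(k-1)" by (metis power_Suc)
    have "V = (\<lambda>i. p*i) ` {..<p^(k-1)}"
    proof (intro Set.set_eqI iffI)
      fix x assume "x \<in> V"
      then have x: "x < p*p^(k-1)" "p dvd x" using memV pk by auto
      then obtain i where i: "x = p*i" by blast
      then have "i < p^(k-1)" using x(1) pos by simp
      then show "x \<in> (\<lambda>i. p*i) ` {..<p^(k-1)}" using i by blast
    next
      fix x assume "x \<in> (\<lambda>i. p*i) ` {..<p^(k-1)}"
      then obtain i where i: "x = p*i" "i < p^(k-1)" by blast
      then have "x < p*p^(k-1)" using pos by simp
      then show "x \<in> V" using memV pk i by simp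
    qed
    moreover have "inj_on (\<lambda>i. p*i) {..<p^(k-1)}" using pos by (auto simp: inj_on_def)
    ultimately show ?thesis by (simp add: card_image)
  qed
  have SETEQ: "{x \<in> V. x \<noteq> 0 \<and> f x = 0}
        = {y * p^l | y l. (k + 1) div 2 \<le> l \<and> l < k \<and> 1 \<le> y \<and> y \<le> p^(k-l) \<and> coprime y p}"
  proof (intro Set.set_eqI iffI)
    fix x assume "x \<in> {x \<in> V. x \<noteq> 0 \<and> f x = 0}"
    then have x: "x < p^k" "p dvd x" "x \<noteq> 0" "x^2 mod p^k = 0" using memV by (auto simp: f_def sqmap_def)
    obtain y l where yl: "x = y*p^l" "coprime y p" using decomp[OF assms(1)] x(3) by blast
    have y0: "y \<ge> 1" using yl(1) x(3) by (cases y) auto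
    have l1: "l \<ge> 1"
    proof (rule ccontr)
      assume "\<not> l \<ge> 1"
      then have "x = y" using yl(1) by simp
      then show False using x(2) coprime_ndvd[OF assms(1) yl(2)] by simp
    qed
    have "p^l \<le> x" using yl(1) y0 by simp
    then have "p^l < p^k" using x(1) by simp
    then have lk: "l < k" using prime_gt_1_nat[OF assms(1)] power_strict_increasing_iff by blast
    have "k = (k-l) + l" using lk by simp
    then have pk: "p^k = p^(k-l)*p^l" by (metis power_add)
    have "y*p^l < p^(k-l)*p^l" using x(1) yl(1) pk by simp
    then have ylt: "y \<le> p^(k-l)" using pos by simp
    have "\<not> 2*l < k"
    proof
      assume A: "2*l < k"
      have "(y^2 mod p^(k-2*l))*p^(2*l) = 0" using sqmod[OF A, of y p] x(4) yl(1) by simp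
      then have "y^2 mod p^(k-2*l) = 0" using pos by simp
      then have "p^(k-2*l) dvd y^2" by (simp add: dvd_eq_mod_eq_0)
      moreover have "p dvd p^(k-2*l)" using A by (intro dvd_power) auto
      ultimately have "p dvd y^2" by (rule dvd_trans[rotated])
      then have "p dvd y" using assms(1) prime_dvd_power by blast
      then show False using coprime_ndvd[OF assms(1) yl(2)] by simp
    qed
    then have "(k + 1) div 2 \<le> l" by simp
    then show "x \<in> {y * p^l | y l. (k + 1) div 2 \<le> l \<and> l < k \<and> 1 \<le> y \<and> y \<le> p^(k-l) \<and> coprime y p}"
      using yl lk y0 ylt by blast
  next
    fix x assume "x \<in> {y * p^l | y l. (k + 1) div 2 \<le> l \<and> l < k \<and> 1 \<le> y \<and> y \<le> p^(k-l) \<and> coprime y p}"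
    then obtain y l where yl: "x = y*p^l" "(k + 1) div 2 \<le> l" "l < k" "1 \<le> y" "y \<le> p^(k-l)" "coprime y p"
      by blast
    have l1: "1 \<le> l" using yl(2) assms(3) by simp
    have m: "x \<in> V" "x \<noteq> 0" using mem_form[OF assms(1) yl(6) l1 yl(3) yl(5)] yl(1) by (simp_all add: V_def)
    have "x^2 = y^2 * p^(2*l)" using yl(1) by (simp add: power_mult_distrib power_even_eq)
    moreover have "p^k dvd p^(2*l)" using yl(2) by (intro le_imp_power_dvd) simp
    ultimately have "p^k dvd x^2" by simp
    then have "f x = 0" by (simp add: f_def sqmap_def)
    then show "x \<in> {x \<in> V. x \<noteq> 0 \<and> f x = 0}" using m by simp
  qed
  have IT: "\<forall>x\<in>V. \<forall>xt l. x \<noteq> 0 \<and> x = xt * p^l \<and> 1 \<le> l \<and> l < k \<and> coprime xt p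
          \<longrightarrow> in_tree_shape V f x (Tp p (xt mod p) l)"
    unfolding V_def f_def using intree[OF assms(1,2)] by blast
  have IT2: "\<forall>y l. (k + 1) div 2 \<le> l \<and> l < k \<and> 1 \<le> y \<and> y \<le> p^(k-l) \<and> coprime y p
          \<longrightarrow> in_tree_shape V f (y * p^l) (Tp p (y mod p) l)"
  proof (intro allI impI)
    fix y l assume yl: "(k + 1) div 2 \<le> l \<and> l < k \<and> 1 \<le> y \<and> y \<le> p^(k-l) \<and> coprime y p"
    have l1: "1 \<le> l" using yl assms(3) by presburger
    have "y*p^l \<in> V" using mem_form[OF assms(1) _ l1] yl by (simp add: V_def)
    then show "in_tree_shape V f (y * p^l) (Tp p (y mod p) l)"
      unfolding V_def f_def using intree[OF assms(1,2)] yl l1 by (simp add: V_def)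
  qed
  show ?thesis using GT CARD SETEQ IT IT2 by (simp add: V_def f_def)
qed


end
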